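(* For any graph $F$ on $y\ge1$ vertices with average degree $d$ and any real $\lambda>0$, \[ \frac{\lambda Z_F'(\lambda)}{Z_F(\lambda)}\ \ge\ \frac{\lambda}{1+\lambda}\,y\,(1+\lambda)^{-d}, \qquad \log Z_F(\lambda)\ \ge\ \begin{cases} y\log(1+\lambda) & \text{if } d=0,\\[2pt] \dfrac{y}{d}\bigl(1-(1+\lambda)^{-d}\bigr) & \text{if } d>0.\end{cases} \]
   Context: $\log$ is the natural logarithm. For a graph $F$, $Z_F(\lambda)=\sum_{I}\lambda^{|I|}$ where the sum is over all independent sets $I$ of $F$ (including $\varnothing$), and $Z_F'$ is its derivative in $\lambda$. The average degree of $F$ is $2|E(F)|/|V(F)|$. *)

theory Defs
  imports "HOL-Analysis.Analysis"
begin

definition simple_graph :: "'a set \<Rightarrow> 'a set set \<Rightarrow> bool" where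
  "simple_graph V E \<longleftrightarrow> finite V \<and> (\<forall>e\<in>E. e \<subseteq> V \<and> card e = 2)"

definition indep_sets :: "'a set \<Rightarrow> 'a set set \<Rightarrow> 'a set set" where
  "indep_sets V E = {I. I \<subseteq> V \<and> (\<forall>e\<in>E. \<not> e \<subseteq> I)}"

definition indep_poly :: "'a set \<Rightarrow> 'a set set \<Rightarrow> real \<Rightarrow> real" where
  "indep_poly V E lam = (\<Sum>I\<in>indep_sets V E. lam ^ card I)"

definition avg_degree :: "'a set \<Rightarrow> 'a set set \<Rightarrow> real" where
  "avg_degree V E = 2 * real (card E) / real (card V)"

end

theory Submission imports Defs begin

definition nbhd :: "'a set set \<Rightarrow> 'a \<Rightarrow> 'a set" where
  "nbhd E v = insert v (\<Union>{e\<in>E. v\<in>e})"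
definition deg :: "'a set set \<Rightarrow> 'a \<Rightarrow> nat" where
  "deg E v = card {e\<in>E. v\<in>e}"

lemma sg_props:
  assumes "simple_graph V E"
  shows "finite V" "finite E" "\<And>e. e \<in> E \<Longrightarrow> finite e \<and> e \<subseteq> V \<and> card e = 2"
proof -
  show fv: "finite V" using assms unfolding simple_graph_def by blast
  have "E \<subseteq> Pow V" using assms unfolding simple_graph_def by blast
  then show "finite E" using fv by (meson finite_Pow_iff finite_subset)
  fix e assume "e \<in> E"
  then show "finite e \<and> e \<subseteq> V \<and> card e = 2" using assms unfolding simple_graph_def
    by (metis card.infinite zero_neq_numeral)
qed

lemma finite_IS: "simple_graph V E \<Longrightarrow> finite (indep_sets V E)"
  using sg_props(1)[of V E] by (rule_tac finite_subset[of _ "Pow V"]) (auto simp: indep_sets_def)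

lemma finite_nbhd: assumes "simple_graph V E" shows "finite (nbhd E v)"
  using sg_props[OF assms] unfolding nbhd_def by auto

lemma card_nbhd: assumes "simple_graph V E" shows "card (nbhd E v) \<le> 1 + deg E v"
proof -
  let ?F = "{e\<in>E. v\<in>e}"
  have fin: "finite ?F" using sg_props(2)[OF assms] by simp
  have eq: "nbhd E v = insert v (\<Union>e\<in>?F. e - {v})" unfolding nbhd_def by auto
  have c1: "\<And>e. e \<in> ?F \<Longrightarrow> card (e - {v}) = 1"
    using sg_props(3)[OF assms] by (simp add: card_Diff_singleton)
  have fu: "finite (\<Union>e\<in>?F. e - {v})" using fin sg_props(3)[OF assms] by auto
  have "card (\<Union>e\<in>?F. e - {v}) \<le> (\<Sum>e\<in>?F. card (e - {v}))" by (rule card_UN_le[OF fin])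
  also have "\<dots> = card ?F" using c1 by simp
  finally have le: "card (\<Union>e\<in>?F. e - {v}) \<le> card ?F" .
  define U where "U = (\<Union>e\<in>?F. e - {v})"
  have fU: "finite U" using fu unfolding U_def .
  have "card (insert v U) \<le> Suc (card U)" by (cases "v \<in> U") (simp_all add: card_insert_if[OF fU])
  then show ?thesis unfolding eq deg_def U_def[symmetric] using le U_def by simp
qed

lemma sum_pow_Pow: "finite N \<Longrightarrow> (\<Sum>S\<in>Pow N. (t::real) ^ card S) = (1+t) ^ card N"
  using prod_add[of N "\<lambda>_. t" "\<lambda>_. 1"] by (simp add: add.commute)

lemma Z_le:
  assumes sg: "simple_graph V E" and t: "t \<ge> 0"
  shows "indep_poly V E t \<le> (1+t) ^ card (nbhd E v) *
     (\<Sum>J\<in>{J\<in>indep_sets V E. J \<inter> nbhd E v = {}}. t ^ card J)"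
proof -
  define N where "N = nbhd E v"
  define IS where "IS = indep_sets V E"
  define B where "B = {J\<in>IS. J \<inter> N = {}}"
  have fN: "finite N" using finite_nbhd[OF sg] N_def by simp
  have fIS: "finite IS" using finite_IS[OF sg] IS_def by simp
  have fB: "finite B" using fIS B_def by simp
  have finI: "\<And>I. I \<in> IS \<Longrightarrow> finite I"
    using sg_props(1)[OF sg] unfolding IS_def indep_sets_def by (auto intro: finite_subset)
  have "indep_poly V E t = (\<Sum>I\<in>IS. t ^ card (I - N) * t ^ card (I \<inter> N))"
    unfolding indep_poly_def IS_def[symmetric]
  proof (rule sum.cong[OF refl])
    fix I assume "I \<in> IS"
    then have "card I = card (I \<inter> N) + card (I - N)" using finI card_Int_Diff by blast
    then show "t ^ card I = t ^ card (I - N) * t ^ card (I \<inter> N)" by (simp add: power_add)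
  qed
  also have "\<dots> = (\<Sum>p\<in>(\<lambda>I. (I - N, I \<inter> N)) ` IS. (case p of (J, S) \<Rightarrow> t ^ card J * t ^ card S))"
    by (subst sum.reindex) (auto simp: inj_on_def)
  also have "\<dots> \<le> (\<Sum>p\<in>B \<times> Pow N. (case p of (J, S) \<Rightarrow> t ^ card J * t ^ card S))"
  proof (rule sum_mono2)
    show "finite (B \<times> Pow N)" using fB fN by simp
    show "(\<lambda>I. (I - N, I \<inter> N)) ` IS \<subseteq> B \<times> Pow N"
      unfolding B_def IS_def indep_sets_def by blast
    show "\<And>b. b \<in> B \<times> Pow N - (\<lambda>I. (I - N, I \<inter> N)) ` IS \<Longrightarrow>
         0 \<le> (case b of (J, S) \<Rightarrow> t ^ card J * t ^ card S)" using t by auto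
  qed
  also have "\<dots> = (\<Sum>J\<in>B. t ^ card J) * (\<Sum>S\<in>Pow N. t ^ card S)"
    by (simp add: sum_product sum.cartesian_product)
  also have "\<dots> = (1+t) ^ card N * (\<Sum>J\<in>B. t ^ card J)"
    using sum_pow_Pow[OF fN] by simp
  finally show ?thesis unfolding N_def B_def IS_def .
qed

lemma A_le:
  assumes sg: "simple_graph V E" and v: "v \<in> V" and t: "(t::real) \<ge> 0"
  shows "t * (\<Sum>J\<in>{J\<in>indep_sets V E. J \<inter> nbhd E v = {}}. t ^ card J)
     \<le> (\<Sum>I\<in>{I\<in>indep_sets V E. v \<in> I}. t ^ card I)"
proof -
  define N where "N = nbhd E v"
  define IS where "IS = indep_sets V E"
  define B where "B = {J\<in>IS. J \<inter> N = {}}"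
  have vN: "v \<in> N" unfolding N_def nbhd_def by simp
  have fIS: "finite IS" using finite_IS[OF sg] IS_def by simp
  have finI: "\<And>I. I \<in> IS \<Longrightarrow> finite I"
    using sg_props(1)[OF sg] unfolding IS_def indep_sets_def by (auto intro: finite_subset)
  have vB: "\<And>J. J \<in> B \<Longrightarrow> v \<notin> J" using vN B_def by blast
  have "t * (\<Sum>J\<in>B. t ^ card J) = (\<Sum>J\<in>B. t * t ^ card J)"
    by (rule sum_distrib_left)
  also have "\<dots> = (\<Sum>J\<in>B. t ^ card (insert v J))"
  proof (rule sum.cong[OF refl])
    fix J assume "J \<in> B"
    then show "t * t ^ card J = t ^ card (insert v J)" using vB finI B_def by simp
  qed
  also have "\<dots> = (\<Sum>I\<in>insert v ` B. t ^ card I)"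
  proof -
    have inj: "inj_on (insert v) B" 
    proof (rule inj_onI)
      fix J K assume JK: "J \<in> B" "K \<in> B" "insert v J = insert v K"
      have "J = insert v J - {v}" using vB[OF JK(1)] by simp
      also have "\<dots> = insert v K - {v}" using JK(3) by simp
      also have "\<dots> = K" using vB[OF JK(2)] by simp
      finally show "J = K" .
    qed
    show ?thesis using sum.reindex[OF inj, of "\<lambda>I. t ^ card I"] by (simp only: comp_def)
  qed
  also have "\<dots> \<le> (\<Sum>I\<in>{I\<in>IS. v \<in> I}. t ^ card I)"
  proof (rule sum_mono2)
    show "finite {I\<in>IS. v \<in> I}" using fIS by simp
    show "\<And>b. b \<in> {I \<in> IS. v \<in> I} - insert v ` B \<Longrightarrow> 0 \<le> t ^ card b" using t by simp
    show "insert v ` B \<subseteq> {I \<in> IS. v \<in> I}"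
    proof
      fix I assume "I \<in> insert v ` B"
      then obtain J where J: "J \<in> B" "I = insert v J" by blast
      have "I \<subseteq> V" using J v unfolding B_def IS_def indep_sets_def by auto
      moreover have "\<not> e \<subseteq> I" if e: "e \<in> E" for e
      proof
        assume sub: "e \<subseteq> I"
        show False
        proof (cases "v \<in> e")
          case True
          then have "e \<subseteq> N" unfolding N_def nbhd_def using e by blast
          then have "e \<subseteq> {v}" using sub J B_def by blast
          then have "card e \<le> 1" using card_mono[of "{v}" e] by simp
          then show False using sg_props(3)[OF sg e] by simp
        next
          case False
          then have "e \<subseteq> J" using sub J by blast
          then show False using J e unfolding B_def IS_def indep_sets_def by blast
        qed
      qed
      ultimately show "I \<in> {I \<in> IS. v \<in> I}" using J unfolding IS_def indep_sets_def by blast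
    qed
  qed
  finally show ?thesis unfolding N_def B_def IS_def .
qed


lemma double_count:
  assumes sg: "simple_graph V E"
  shows "(\<Sum>I\<in>indep_sets V E. real (card I) * (t::real) ^ card I)
     = (\<Sum>v\<in>V. \<Sum>I\<in>{I\<in>indep_sets V E. v \<in> I}. t ^ card I)"
proof -
  have fIS: "finite (indep_sets V E)" using finite_IS[OF sg] .
  have fV: "finite V" using sg_props(1)[OF sg] .
  have "(\<Sum>v\<in>V. \<Sum>I\<in>{I\<in>indep_sets V E. v \<in> I}. t ^ card I)
      = (\<Sum>v\<in>V. \<Sum>I\<in>indep_sets V E. if v \<in> I then t ^ card I else 0)"
    by (rule sum.cong[OF refl], rule sum.inter_filter[OF fIS])
  also have "\<dots> = (\<Sum>I\<in>indep_sets V E. \<Sum>v\<in>V. if v \<in> I then t ^ card I else 0)"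
    by (rule sum.swap)
  also have "\<dots> = (\<Sum>I\<in>indep_sets V E. real (card I) * t ^ card I)"
  proof (rule sum.cong[OF refl])
    fix I assume I: "I \<in> indep_sets V E"
    then have IV: "I \<subseteq> V" unfolding indep_sets_def by blast
    have "(\<Sum>v\<in>V. if v \<in> I then t ^ card I else 0) = (\<Sum>v\<in>{v\<in>V. v \<in> I}. t ^ card I)"
      by (rule sum.inter_filter[OF fV, symmetric])
    also have "{v\<in>V. v \<in> I} = I" using IV by blast
    finally show "(\<Sum>v\<in>V. if v \<in> I then t ^ card I else 0) = real (card I) * t ^ card I"
      by simp
  qed
  finally show ?thesis by simp
qed

lemma handshake:
  assumes sg: "simple_graph V E"
  shows "(\<Sum>v\<in>V. real (deg E v)) = 2 * real (card E)"
proof -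
  have fE: "finite E" using sg_props(2)[OF sg] .
  have fV: "finite V" using sg_props(1)[OF sg] .
  have "(\<Sum>v\<in>V. real (deg E v)) = (\<Sum>v\<in>V. \<Sum>e\<in>{e\<in>E. v\<in>e}. (1::real))"
    unfolding deg_def by simp
  also have "\<dots> = (\<Sum>v\<in>V. \<Sum>e\<in>E. if v \<in> e then 1 else 0)"
    by (rule sum.cong[OF refl], rule sum.inter_filter[OF fE])
  also have "\<dots> = (\<Sum>e\<in>E. \<Sum>v\<in>V. if v \<in> e then 1 else 0)"
    by (rule sum.swap)
  also have "\<dots> = (\<Sum>e\<in>E. (2::real))"
  proof (rule sum.cong[OF refl])
    fix e assume e: "e \<in> E"
    have "(\<Sum>v\<in>V. if v \<in> e then 1 else (0::real)) = (\<Sum>v\<in>{v\<in>V. v \<in> e}. 1)"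
      by (rule sum.inter_filter[OF fV, symmetric])
    also have "{v\<in>V. v \<in> e} = e" using sg_props(3)[OF sg e] by blast
    finally show "(\<Sum>v\<in>V. if v \<in> e then 1 else (0::real)) = 2"
      using sg_props(3)[OF sg e] by simp
  qed
  finally show ?thesis by simp
qed

lemma jensen_exp:
  fixes x :: "'a \<Rightarrow> real"
  assumes fV: "finite V" and c: "c > 0" and sx: "(\<Sum>v\<in>V. x v) = real (card V) * m"
  shows "(\<Sum>v\<in>V. c powr (- x v)) \<ge> real (card V) * c powr (- m)"
proof -
  define L where "L = ln c"
  define a where "a = exp (- m * L)"
  have pw: "\<And>z. c powr z = exp (z * L)" using c unfolding L_def by (simp add: powr_def)
  have each: "c powr (- x v) \<ge> a * (1 - (x v - m) * L)" for v
  proof -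
    have "c powr (- x v) = a * exp (- ((x v - m) * L))"
      unfolding pw a_def by (simp add: exp_add[symmetric] algebra_simps)
    moreover have "exp (- ((x v - m) * L)) \<ge> 1 - (x v - m) * L"
      using exp_ge_add_one_self[of "- ((x v - m) * L)"] by simp
    moreover have "a > 0" unfolding a_def by simp
    ultimately show ?thesis by simp
  qed
  have "(\<Sum>v\<in>V. c powr (- x v)) \<ge> (\<Sum>v\<in>V. a * (1 - (x v - m) * L))"
    by (rule sum_mono) (rule each)
  also have "(\<Sum>v\<in>V. a * (1 - (x v - m) * L)) = a * (real (card V) - L * ((\<Sum>v\<in>V. x v) - real (card V) * m))"
    by (simp add: sum_distrib_left[symmetric] sum_subtractf sum.distrib algebra_simps sum_distrib_right[symmetric])
  also have "\<dots> = real (card V) * c powr (- m)" using sx unfolding a_def pw by simp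
  finally show ?thesis .
qed

lemma Z_deriv:
  assumes sg: "simple_graph V E"
  shows "(indep_poly V E has_real_derivative
     (\<Sum>I\<in>indep_sets V E. real (card I) * x ^ (card I - 1))) (at x)"
proof -
  have eq: "indep_poly V E = (\<lambda>t. \<Sum>I\<in>indep_sets V E. t ^ card I)"
    by (rule ext) (simp add: indep_poly_def)
  show ?thesis unfolding eq by (rule DERIV_sum) (simp add: DERIV_pow)
qed

lemma Z_ge1: assumes sg: "simple_graph V E" and t: "t \<ge> 0" shows "indep_poly V E t \<ge> 1"
proof -
  have "{} \<in> indep_sets V E" unfolding indep_sets_def using sg_props(3)[OF sg] by force
  then have "t ^ card ({}::'a set) \<le> indep_poly V E t" unfolding indep_poly_def
    by (rule member_le_sum) (use finite_IS[OF sg] t in auto)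
  then show ?thesis by simp
qed

lemma Z_0: assumes sg: "simple_graph V E" shows "indep_poly V E 0 = 1"
proof -
  have e: "{} \<in> indep_sets V E" unfolding indep_sets_def using sg_props(3)[OF sg] by force
  have finI: "\<And>I. I \<in> indep_sets V E \<Longrightarrow> finite I"
    using sg_props(1)[OF sg] unfolding indep_sets_def by (auto intro: finite_subset)
  have "indep_poly V E 0 = (\<Sum>I\<in>indep_sets V E. if I = {} then 1 else 0)"
    unfolding indep_poly_def by (rule sum.cong[OF refl]) (use finI in auto)
  also have "\<dots> = 1" using finite_IS[OF sg] e by (simp add: sum.delta)
  finally show ?thesis .
qed


lemma vertex_bound:
  assumes sg: "simple_graph V E" and v: "v \<in> V" and t: "t > 0"
  shows "t * indep_poly V E t * ((1+t) powr (- real (deg E v)) / (1+t))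
     \<le> (\<Sum>I\<in>{I\<in>indep_sets V E. v \<in> I}. t ^ card I)"
proof -
  define A where "A = (\<Sum>J\<in>{J\<in>indep_sets V E. J \<inter> nbhd E v = {}}. t ^ card J)"
  define Z where "Z = indep_poly V E t"
  define k where "k = deg E v"
  have A0: "A \<ge> 0" unfolding A_def using t by (simp add: sum_nonneg)
  have "Z \<le> (1+t) ^ card (nbhd E v) * A" unfolding Z_def A_def using Z_le[OF sg] t by simp
  also have "\<dots> \<le> (1+t) ^ Suc k * A"
    using card_nbhd[OF sg, of v] t A0 unfolding k_def
    by (intro mult_right_mono power_increasing) auto
  finally have ZA: "Z / (1+t) ^ Suc k \<le> A" using t by (simp add: divide_le_eq mult.commute)
  have pw: "(1+t) powr (- real k) / (1+t) = 1 / (1+t) ^ Suc k"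
    using t by (simp add: powr_minus powr_realpow divide_inverse)
  have "t * Z * ((1+t) powr (- real k) / (1+t)) = t * (Z / (1+t) ^ Suc k)"
    unfolding pw by simp
  also have "\<dots> \<le> t * A" using mult_left_mono[OF ZA, of t] t by simp
  also have "\<dots> \<le> (\<Sum>I\<in>{I\<in>indep_sets V E. v \<in> I}. t ^ card I)"
    unfolding A_def using A_le[OF sg v] t by simp
  finally show ?thesis unfolding Z_def k_def .
qed

lemma bound1:
  assumes sg: "simple_graph V E" and V1: "card V \<ge> 1" and t: "t > 0"
  shows "(\<Sum>I\<in>indep_sets V E. real (card I) * t ^ card I)
     \<ge> t / (1+t) * indep_poly V E t * (real (card V) * (1+t) powr (- avg_degree V E))"
proof -
  define Z where "Z = indep_poly V E t"
  have fV: "finite V" using sg_props(1)[OF sg] .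
  have Z0: "Z \<ge> 0" using Z_ge1[OF sg, of t] t unfolding Z_def by simp
  have sd: "(\<Sum>v\<in>V. real (deg E v)) = real (card V) * avg_degree V E"
    using handshake[OF sg] V1 unfolding avg_degree_def by simp
  have J: "(\<Sum>v\<in>V. (1+t) powr (- real (deg E v))) \<ge> real (card V) * (1+t) powr (- avg_degree V E)"
    by (rule jensen_exp[OF fV _ sd]) (use t in simp)
  have "t / (1+t) * Z * (real (card V) * (1+t) powr (- avg_degree V E))
      \<le> t / (1+t) * Z * (\<Sum>v\<in>V. (1+t) powr (- real (deg E v)))"
    using J Z0 t by (intro mult_left_mono) auto
  also have "\<dots> = (\<Sum>v\<in>V. t * Z * ((1+t) powr (- real (deg E v)) / (1+t)))"
    by (simp add: sum_distrib_left sum_divide_distrib)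
  also have "\<dots> \<le> (\<Sum>v\<in>V. \<Sum>I\<in>{I\<in>indep_sets V E. v \<in> I}. t ^ card I)"
    by (rule sum_mono) (use vertex_bound[OF sg _ t] Z_def in simp)
  also have "\<dots> = (\<Sum>I\<in>indep_sets V E. real (card I) * t ^ card I)"
    using double_count[OF sg] by simp
  finally show ?thesis unfolding Z_def .
qed


lemma h_deriv:
  fixes y d x :: real
  assumes x: "x > -1" and d: "d \<ge> 0"
  shows "((\<lambda>x. if d = 0 then y * ln (1 + x) else y / d * (1 - (1 + x) powr (- d)))
     has_real_derivative y * (1 + x) powr (- d - 1)) (at x)"
proof (cases "d = 0")
  case True
  have "((\<lambda>x. y * ln (1 + x)) has_real_derivative y * (1 / (1 + x) * 1)) (at x)"
    by (intro DERIV_cmult DERIV_chain2[OF DERIV_ln_divide] derivative_eq_intros) (use x in auto)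
  moreover have "(1 + x) powr (- d - 1) = 1 / (1 + x)" using True x by (simp add: powr_minus_divide)
  ultimately show ?thesis using True by simp
next
  case False
  have "((\<lambda>x. y / d * (1 - (1 + x) powr (- d))) has_real_derivative y / d * (0 - (- d * (1 + x) powr (- d - 1) * (0 + 1)))) (at x)"
    by (intro DERIV_cmult DERIV_diff DERIV_const DERIV_chain2[OF has_real_derivative_powr] DERIV_add DERIV_ident)
       (use x in auto)
  then show ?thesis using False by simp
qed


lemma tZd:
  "t * (\<Sum>I\<in>S. real (card I) * t ^ (card I - 1)) = (\<Sum>I\<in>S. real (card I) * (t::real) ^ card I)"
  unfolding sum_distrib_left
proof (rule sum.cong[OF refl])
  fix I :: "'a set"
  show "t * (real (card I) * t ^ (card I - 1)) = real (card I) * t ^ card I"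
    by (cases "card I") auto
qed

theorem mainTheorem5:
  fixes V :: "'a set" and E :: "'a set set" and lam :: real
  assumes "simple_graph V E" and "card V \<ge> 1" and "lam > 0"
  defines "y \<equiv> real (card V)" and "d \<equiv> avg_degree V E"
  shows "lam * deriv (indep_poly V E) lam / indep_poly V E lam
           \<ge> lam / (1 + lam) * y * (1 + lam) powr (- d)
         \<and> ln (indep_poly V E lam)
           \<ge> (if d = 0 then y * ln (1 + lam) else y / d * (1 - (1 + lam) powr (- d)))"
proof -
  note sg = assms(1)
  define Z where "Z = indep_poly V E"
  define Zd where "Zd = (\<lambda>x. \<Sum>I\<in>indep_sets V E. real (card I) * x ^ (card I - 1))"
  define h where "h = (\<lambda>x. if d = 0 then y * ln (1 + x) else y / d * (1 - (1 + x) powr (- d)))"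
  have ZD: "\<And>x. (Z has_real_derivative Zd x) (at x)" unfolding Z_def Zd_def by (rule Z_deriv[OF sg])
  have Zpos: "\<And>x. x \<ge> 0 \<Longrightarrow> Z x > 0" unfolding Z_def using Z_ge1[OF sg] by fastforce
  have d0: "d \<ge> 0" unfolding d_def avg_degree_def by simp
  have key: "x * Zd x \<ge> x / (1 + x) * Z x * (y * (1 + x) powr (- d))" if x: "x > 0" for x
  proof -
    have e: "x * Zd x = (\<Sum>I\<in>indep_sets V E. real (card I) * x ^ card I)"
      unfolding Zd_def by (rule tZd)
    show ?thesis unfolding e using bound1[OF sg assms(2) x] unfolding Z_def y_def d_def by simp
  qed
  have key2: "Zd x / Z x \<ge> y * (1 + x) powr (- d - 1)" if x: "x > 0" for x
  proof -
    have p: "(1 + x) powr (- d - 1) = (1 + x) powr (- d) / (1 + x)"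
      using x by (simp add: powr_diff)
    have "x * (y * (1 + x) powr (- d - 1) * Z x) \<le> x * Zd x"
      using key[OF x] x unfolding p by (simp add: field_simps)
    then have "y * (1 + x) powr (- d - 1) * Z x \<le> Zd x" using x by simp
    then show ?thesis using Zpos[of x] x by (simp add: pos_le_divide_eq)
  qed
  have part1: "lam * deriv Z lam / Z lam \<ge> lam / (1 + lam) * y * (1 + lam) powr (- d)"
  proof -
    have "deriv Z lam = Zd lam" by (rule DERIV_imp_deriv[OF ZD])
    moreover have "lam / (1 + lam) * y * (1 + lam) powr (- d) * Z lam \<le> lam * Zd lam"
      using key[OF assms(3)] by (simp add: ac_simps)
    ultimately show ?thesis using Zpos[of lam] assms(3) by (simp add: pos_le_divide_eq)
  qed
  define g where "g = (\<lambda>x. ln (Z x) - h x)"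
  have gD: "(g has_real_derivative (1 / Z x * Zd x - y * (1 + x) powr (- d - 1))) (at x)"
    if x: "x \<ge> 0" for x
    unfolding g_def h_def
    by (intro DERIV_diff DERIV_chain2[OF DERIV_ln_divide ZD] h_deriv) (use x d0 Zpos in auto)
  have "g 0 \<le> g lam"
  proof (rule DERIV_nonneg_imp_increasing_open[of 0 lam])
    show "0 \<le> lam" using assms(3) by simp
    fix x assume x: "0 < x" "x < lam"
    show "\<exists>y'. (g has_real_derivative y') (at x) \<and> 0 \<le> y'"
      using gD[of x] key2[of x] x by (intro exI[of _ "1 / Z x * Zd x - y * (1 + x) powr (- d - 1)"]) auto
  next
    show "continuous_on {0..lam} g"
      by (rule continuous_at_imp_continuous_on) (use gD DERIV_isCont in fastforce)
  qed
  moreover have "g 0 = 0" unfolding g_def h_def Z_def using Z_0[OF sg] by simp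
  ultimately have "ln (Z lam) \<ge> h lam" unfolding g_def by simp
  then show ?thesis using part1 unfolding Z_def h_def by simp
qed

end
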